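(* Let $\{\Delta_1,\dots,\Delta_r\}$ be a nef-partition of a reflexive polytope $\Delta$ with dual nef-partition $\{\nabla_1,\dots,\nabla_r\}$. Then $l(\Delta^* )=l(\nabla_1)+\dots+l(\nabla_r)-r+1$.
   Context: Let $M\cong\mathbb Z^d$, $N=\mathrm{Hom}(M,\mathbb Z)$. For a lattice polytope $\Theta$, $l(\Theta)$ is its number of lattice points. A $d$-dimensional lattice polytope $\Delta\subset M_{\mathbb R}$ is reflexive if $\Delta=\{x:\langle x,e_k\rangle\ge-1,\ k=1,\dots,n\}$ with $e_k\in N$ the primitive inward facet normals; $\Delta^*=\mathrm{Conv}(e_1,\dots,e_n)$. A nef-partition is a Minkowski decomposition $\Delta=\Delta_1+\dots+\Delta_r$ into lattice polytopes with $\varphi_j(e_k)\in\{0,1\}$ for all $j,k$, $\varphi_j(y)=-\min_{x\in\Delta_j}\langle x,y\rangle$; the dual nef-partition consists of $\nabla_j=\mathrm{Conv}(\{0\}\cup\{e_k:\varphi_j(e_k)=1\})\subset N_{\mathbb R}$. *)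

theory Defs
  imports "HOL-Analysis.Analysis"
begin

text \<open>Both M and N = Hom(M,Z) are modelled as the integer points of real^'d,
  the pairing being the standard inner product.\<close>

definition lattice_point :: "real ^ 'd \<Rightarrow> bool" where
  "lattice_point x \<longleftrightarrow> (\<forall>i. x $ i \<in> \<int>)"

definition primitive :: "real ^ 'd \<Rightarrow> bool" where
  "primitive e \<longleftrightarrow> lattice_point e \<and> e \<noteq> 0 \<and>
     (\<forall>m::int. m > 1 \<longrightarrow> \<not> lattice_point ((1 / real_of_int m) *\<^sub>R e))"

definition lpts :: "(real ^ 'd) set \<Rightarrow> nat" where
  "lpts P = card {x \<in> P. lattice_point x}"

definition lattice_polytope :: "(real ^ 'd) set \<Rightarrow> bool" where
  "lattice_polytope P \<longleftrightarrow> (\<exists>V. finite V \<and> (\<forall>v\<in>V. lattice_point v) \<and> P = convex hull V)"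

definition reflexive_with_normals :: "(real ^ 'd) set \<Rightarrow> (real ^ 'd) set \<Rightarrow> bool" where
  "reflexive_with_normals \<Delta> E \<longleftrightarrow>
     lattice_polytope \<Delta> \<and> aff_dim \<Delta> = int CARD('d) \<and> finite E \<and>
     (\<forall>e\<in>E. primitive e \<and> {x \<in> \<Delta>. x \<bullet> e = -1} facet_of \<Delta>) \<and>
     \<Delta> = {x. \<forall>e\<in>E. x \<bullet> e \<ge> -1}"

definition supp_phi :: "(real ^ 'd) set \<Rightarrow> real ^ 'd \<Rightarrow> real" where
  "supp_phi P y = - Inf ((\<lambda>x. x \<bullet> y) ` P)"

definition minkowski_sum :: "nat \<Rightarrow> (nat \<Rightarrow> (real ^ 'd) set) \<Rightarrow> (real ^ 'd) set" where
  "minkowski_sum r D = {\<Sum>j<r. x j | x. \<forall>j<r. x j \<in> D j}"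

definition nef_partition ::
  "(real ^ 'd) set \<Rightarrow> (real ^ 'd) set \<Rightarrow> nat \<Rightarrow> (nat \<Rightarrow> (real ^ 'd) set) \<Rightarrow> bool" where
  "nef_partition \<Delta> E r D \<longleftrightarrow>
     (\<forall>j<r. lattice_polytope (D j)) \<and> \<Delta> = minkowski_sum r D \<and>
     (\<forall>j<r. \<forall>e\<in>E. supp_phi (D j) e \<in> {0, 1})"

definition dual_nef_part :: "(real ^ 'd) set \<Rightarrow> (real ^ 'd) set \<Rightarrow> (real ^ 'd) set" where
  "dual_nef_part E Dj = convex hull (insert 0 {e \<in> E. supp_phi Dj e = 1})"

end

theory Submission imports Defs begin

lemma lattice_finite:
  fixes S :: "(real ^ 'd) set"
  assumes "bounded S"
  shows "finite {x \<in> S. lattice_point x}"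
proof -
  obtain B where B: "\<And>x. x \<in> S \<Longrightarrow> norm x \<le> B" using assms bounded_iff by blast
  define K where "K = \<lceil>B\<rceil>"
  have "{x \<in> S. lattice_point x} \<subseteq> (\<lambda>f. \<chi> i. real_of_int (f i)) ` (\<Pi>\<^sub>E i\<in>UNIV. {-K..K})"
  proof
    fix x assume x: "x \<in> {x \<in> S. lattice_point x}"
    define f where "f = (\<lambda>i. \<lfloor>x $ i\<rfloor>)"
    have xi: "x $ i = real_of_int (f i)" for i
      using x unfolding lattice_point_def f_def by (auto elim!: Ints_cases)
    have "\<bar>x $ i\<bar> \<le> B" for i using B[of x] x component_le_norm_cart[of x i] by auto
    hence "f i \<in> {-K..K}" for i
    proof -
      have "\<bar>real_of_int (f i)\<bar> \<le> B" using xi[of i] \<open>\<And>i. \<bar>x $ i\<bar> \<le> B\<close>[of i] by simp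
      hence "real_of_int (f i) \<le> B" "- B \<le> real_of_int (f i)" by linarith+
      hence "f i \<le> \<lceil>B\<rceil>" "- \<lceil>B\<rceil> \<le> f i" by linarith+
      thus ?thesis unfolding K_def by simp
    qed
    hence "f \<in> (\<Pi>\<^sub>E i\<in>UNIV. {-K..K})" by auto
    moreover have "x = (\<chi> i. real_of_int (f i))" using xi by (simp add: vec_eq_iff)
    ultimately show "x \<in> (\<lambda>f. \<chi> i. real_of_int (f i)) ` (\<Pi>\<^sub>E i\<in>UNIV. {-K..K})" by blast
  qed
  moreover have "finite (\<Pi>\<^sub>E i\<in>(UNIV::'d set). {-K..K})" by (intro finite_PiE) auto
  ultimately show ?thesis by (meson finite_imageI finite_subset)
qed

lemma hull_min_inner:
  fixes V :: "(real ^ 'd) set"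
  assumes "finite V" "V \<noteq> {}"
  shows "\<exists>v\<in>V. \<forall>x\<in>convex hull V. v \<bullet> y \<le> x \<bullet> y"
proof -
  let ?m = "Min ((\<lambda>w. w \<bullet> y) ` V)"
  obtain v where v: "v \<in> V" "v \<bullet> y = ?m" proof -
    have "?m \<in> (\<lambda>w. w \<bullet> y) ` V" using assms by (intro Min_in) auto
    thus ?thesis using that by auto
  qed
  have "\<forall>w\<in>V. v \<bullet> y \<le> w \<bullet> y" using v assms by auto
  hence "V \<subseteq> {x. inner y x \<ge> v \<bullet> y}" by (auto simp: inner_commute)
  hence "convex hull V \<subseteq> {x. inner y x \<ge> v \<bullet> y}"
    by (intro hull_minimal convex_halfspace_ge)
  thus ?thesis using v by (intro bexI[of _ v]) (auto simp: inner_commute)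
qed

lemma sum_ge_eq:
  fixes a b :: "'i \<Rightarrow> real"
  assumes "finite A" "\<And>i. i \<in> A \<Longrightarrow> a i \<ge> b i" "sum a A = sum b A" "i \<in> A"
  shows "a i = b i"
proof -
  have "sum (\<lambda>i. a i - b i) A = 0" using assms by (simp add: sum_subtractf)
  hence "\<forall>i\<in>A. a i - b i = 0" using assms by (subst (asm) sum_nonneg_eq_0_iff) auto
  thus ?thesis using assms by auto
qed

lemma lattice_inner_int:
  "lattice_point (x::real^'d) \<Longrightarrow> lattice_point y \<Longrightarrow> x \<bullet> y \<in> \<int>"
  unfolding lattice_point_def inner_vec_def by (auto intro!: Ints_sum Ints_mult)

theorem mainTheorem11:
  fixes \<Delta> E :: "(real ^ 'd) set" and r :: nat and D :: "nat \<Rightarrow> (real ^ 'd) set"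
  assumes "reflexive_with_normals \<Delta> E"
    and "nef_partition \<Delta> E r D"
  shows "int (lpts (convex hull E)) =
           (\<Sum>j<r. int (lpts (dual_nef_part E (D j)))) - int r + 1"
proof -
  note R = assms(1)[unfolded reflexive_with_normals_def]
  note NP = assms(2)[unfolded nef_partition_def]
  have finE: "finite E" using R by blast
  have facet: "\<And>e. e \<in> E \<Longrightarrow> {x \<in> \<Delta>. x \<bullet> e = -1} facet_of \<Delta>" using R by blast
  have latE: "\<And>e. e \<in> E \<Longrightarrow> lattice_point e" using R primitive_def by blast
  have DeltaEq: "\<Delta> = {x. \<forall>e\<in>E. x \<bullet> e \<ge> -1}" using R by blast
  have phi01: "\<And>j e. j < r \<Longrightarrow> e \<in> E \<Longrightarrow> supp_phi (D j) e \<in> {0, 1}" using NP by blast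
  have Dset: "\<Delta> = minkowski_sum r D" using NP by blast
  have DmemD: "\<And>x. x \<in> \<Delta> \<Longrightarrow> (\<exists>f. (\<forall>j<r. f j \<in> D j) \<and> x = (\<Sum>j<r. f j))"
    unfolding Dset minkowski_sum_def by (simp only: mem_Collect_eq) blast
  have DmemI: "\<And>f. (\<forall>j<r. f j \<in> D j) \<Longrightarrow> (\<Sum>j<r. f j) \<in> \<Delta>"
    unfolding Dset minkowski_sum_def by (simp only: mem_Collect_eq) blast
  obtain VD where VD: "\<And>j. j < r \<Longrightarrow> finite (VD j) \<and> (\<forall>v\<in>VD j. lattice_point v) \<and> D j = convex hull (VD j)"
  proof -
    have "\<forall>j\<in>{..<r}. \<exists>V. finite V \<and> (\<forall>v\<in>V. lattice_point v) \<and> D j = convex hull V"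
      using NP unfolding lattice_polytope_def by blast
    then obtain V where "\<forall>j\<in>{..<r}. finite (V j) \<and> (\<forall>v\<in>V j. lattice_point v) \<and> D j = convex hull (V j)"
      by (metis bchoice)
    thus ?thesis using that by blast
  qed
  obtain VV where VV: "finite VV" "\<Delta> = convex hull VV" using R unfolding lattice_polytope_def by blast
  have bdd: "bounded \<Delta>" using VV by (simp add: compact_imp_bounded compact_convex_hull finite_imp_compact)
  have Dne: "\<Delta> \<noteq> {}"
  proof
    assume "\<Delta> = {}"
    hence "aff_dim \<Delta> = -1" by simp
    moreover have "aff_dim \<Delta> = int CARD('d)" using R by blast
    ultimately show False by simp
  qed
  have DjNe: "D j \<noteq> {}" if "j < r" for j
    using Dne DmemD that by blast
  define \<phi> where "\<phi> = (\<lambda>j y. supp_phi (D j) y)"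
  have minD: "\<exists>m\<in>D j. (\<forall>x\<in>D j. m \<bullet> y \<le> x \<bullet> y) \<and> \<phi> j y = - (m \<bullet> y) \<and> (lattice_point y \<longrightarrow> \<phi> j y \<in> \<int>)"
    if "j < r" for j y
  proof -
    have V: "finite (VD j)" "VD j \<noteq> {}" "\<forall>v\<in>VD j. lattice_point v" "D j = convex hull (VD j)"
      using VD[OF that] DjNe[OF that] by auto
    obtain v where v: "v \<in> VD j" "\<forall>x\<in>D j. v \<bullet> y \<le> x \<bullet> y" using hull_min_inner[OF V(1,2), of y] V(4) by auto
    have vD: "v \<in> D j" using v(1) V(4) by (simp add: hull_inc)
    have "Inf ((\<lambda>x. x \<bullet> y) ` D j) = v \<bullet> y" using v vD by (intro cInf_eq_minimum) auto
    hence "\<phi> j y = - (v \<bullet> y)" unfolding \<phi>_def supp_phi_def by simp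
    moreover have "lattice_point y \<longrightarrow> v \<bullet> y \<in> \<int>" using lattice_inner_int V(3) v(1) by blast
    ultimately show ?thesis using vD v(2) by auto
  qed
  have lowD: "x \<bullet> y \<ge> - \<phi> j y" if "j < r" "x \<in> D j" for j x y
    using minD[OF that(1), of y] that(2) by force
  define \<Phi> where "\<Phi> = (\<lambda>y. \<Sum>j<r. \<phi> j y)"
  have PhiLow: "x \<bullet> y \<ge> - \<Phi> y" if xD: "x \<in> \<Delta>" for x y
  proof -
    obtain f where f: "\<forall>j<r. f j \<in> D j" "x = (\<Sum>j<r. f j)" using DmemD[OF xD] by blast
    have "x \<bullet> y = (\<Sum>j<r. f j \<bullet> y)" using f(2) by (simp add: inner_sum_left)
    also have "\<dots> \<ge> (\<Sum>j<r. - \<phi> j y)" using f(1) lowD by (intro sum_mono) auto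
    finally show ?thesis unfolding \<Phi>_def by (simp add: sum_negf)
  qed
  have PhiAtt: "\<exists>x\<in>\<Delta>. x \<bullet> y = - \<Phi> y" for y
  proof -
    have "\<forall>j\<in>{..<r}. \<exists>m. m \<in> D j \<and> m \<bullet> y = - \<phi> j y"
    proof
      fix j assume "j \<in> {..<r}"
      then obtain m where "m \<in> D j" "\<phi> j y = - (m \<bullet> y)" using minD[of j y] by auto
      thus "\<exists>m. m \<in> D j \<and> m \<bullet> y = - \<phi> j y" by auto
    qed
    then obtain m where m: "\<forall>j\<in>{..<r}. m j \<in> D j \<and> m j \<bullet> y = - \<phi> j y" by (metis bchoice)
    have "(\<Sum>j<r. m j) \<in> \<Delta>" using DmemI m by blast
    moreover have "(\<Sum>j<r. m j) \<bullet> y = - \<Phi> y" using m unfolding \<Phi>_def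
      by (simp add: inner_sum_left sum_negf)
    ultimately show ?thesis by blast
  qed
  have PhiE: "\<Phi> e = 1" if eE: "e \<in> E" for e
  proof -
    obtain x where "x \<in> \<Delta>" "x \<bullet> e = -1" using facet[OF eE] unfolding facet_of_def by blast
    hence "\<Phi> e \<ge> 1" using PhiLow[of x e] by linarith
    moreover obtain x' where "x' \<in> \<Delta>" "x' \<bullet> e = - \<Phi> e" using PhiAtt by blast
    hence "\<Phi> e \<le> 1" using DeltaEq eE by auto
    ultimately show ?thesis by simp
  qed
  have zero: "y = 0" if "\<forall>x\<in>\<Delta>. 0 \<le> x \<bullet> y" for y
  proof -
    define s where "s = (\<Sum>e\<in>E. \<bar>y \<bullet> e\<bar>)"
    have s0: "s \<ge> 0" unfolding s_def by (simp add: sum_nonneg)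
    define \<epsilon> where "\<epsilon> = 1 / (1 + s)"
    have ep: "\<epsilon> > 0" "\<epsilon> * s \<le> 1" using s0 unfolding \<epsilon>_def by (auto simp: field_simps)
    have "(- \<epsilon>) *\<^sub>R y \<in> \<Delta>"
    proof -
      have "((- \<epsilon>) *\<^sub>R y) \<bullet> e \<ge> -1" if "e \<in> E" for e
      proof -
        have "\<bar>y \<bullet> e\<bar> \<le> s" unfolding s_def using finE that by (intro member_le_sum) auto
        hence "\<epsilon> * (y \<bullet> e) \<le> 1" using ep by (smt (verit) mult_left_mono abs_ge_self)
        thus ?thesis by simp
      qed
      thus ?thesis using DeltaEq by blast
    qed
    hence "0 \<le> ((- \<epsilon>) *\<^sub>R y) \<bullet> y" using that by blast
    hence "y \<bullet> y \<le> 0" using ep by (simp add: mult_le_0_iff)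
    thus ?thesis using inner_ge_zero[of y] inner_eq_zero_iff by (metis order.antisym)
  qed
  have Ene: "E \<noteq> {}"
  proof
    assume "E = {}"
    hence "\<Delta> = UNIV" using DeltaEq by simp
    thus False using bdd not_bounded_UNIV by metis
  qed
  have zeroE: "0 \<in> convex hull E"
  proof (rule ccontr)
    assume n: "0 \<notin> convex hull E"
    have "closed (convex hull E)" using finE by (simp add: compact_imp_closed compact_convex_hull finite_imp_compact)
    then obtain a b where ab: "inner a 0 < b" "\<forall>x\<in>convex hull E. b < inner a x"
      using separating_hyperplane_closed_point[OF convex_convex_hull _ n] by blast
    obtain e0 where e0: "e0 \<in> E" using Ene by blast
    have "b < inner a e0" using ab(2) e0 by (simp add: hull_inc)
    hence a0: "a \<noteq> 0" using ab(1) by auto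
    have pos: "\<And>e. e \<in> E \<Longrightarrow> inner a e > 0" using ab by (auto simp: hull_inc) (smt (verit, best) hull_inc)
    obtain B where B: "\<And>x. x \<in> \<Delta> \<Longrightarrow> norm x \<le> B" using bdd bounded_iff by blast
    define t where "t = (\<bar>B\<bar> + 1) / norm a"
    have t0: "t \<ge> 0" unfolding t_def by simp
    have "t *\<^sub>R a \<in> \<Delta>"
    proof -
      have "(t *\<^sub>R a) \<bullet> e \<ge> -1" if "e \<in> E" for e
        using pos[OF that] t0 by (simp add: inner_commute) (smt (verit) mult_nonneg_nonneg)
      thus ?thesis using DeltaEq by blast
    qed
    hence "norm (t *\<^sub>R a) \<le> B" using B by blast
    moreover have "norm (t *\<^sub>R a) = \<bar>B\<bar> + 1" using a0 unfolding t_def by simp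
    ultimately show False by simp
  qed
  have farkas: "\<exists>\<mu> T. T \<subseteq> E \<and> (\<forall>e. \<mu> e \<ge> 0) \<and> y = (\<Sum>e\<in>T. \<mu> e *\<^sub>R e) \<and>
                  (\<forall>j<r. \<phi> j y = (\<Sum>e\<in>T. \<mu> e * \<phi> j e))" for y
  proof -
    obtain xs where xs: "xs \<in> \<Delta>" "xs \<bullet> y = - \<Phi> y" using PhiAtt by blast
    define T where "T = {e \<in> E. xs \<bullet> e = -1}"
    have TE: "T \<subseteq> E" unfolding T_def by blast
    have finT: "finite T" using finE TE finite_subset by blast
    define K where "K = {(\<Sum>e\<in>T. \<mu> e *\<^sub>R e) | \<mu>. \<forall>e. \<mu> e \<ge> 0}"
    have "convex_cone K"
      unfolding convex_cone_iff
    proof (intro conjI ballI allI impI)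
      show "0 \<in> K" unfolding K_def by (rule CollectI, rule exI[of _ "\<lambda>_. 0"]) simp
    next
      fix x z assume "x \<in> K" "z \<in> K"
      then obtain \<mu> \<nu> where "x = (\<Sum>e\<in>T. \<mu> e *\<^sub>R e)" "\<forall>e. \<mu> e \<ge> 0"
          "z = (\<Sum>e\<in>T. \<nu> e *\<^sub>R e)" "\<forall>e. \<nu> e \<ge> 0" unfolding K_def by blast
      thus "x + z \<in> K" unfolding K_def
        by (intro CollectI exI[of _ "\<lambda>e. \<mu> e + \<nu> e"]) (auto simp: scaleR_add_left sum.distrib)
    next
      fix x and c :: real assume "x \<in> K" "c \<ge> 0"
      then obtain \<mu> where "x = (\<Sum>e\<in>T. \<mu> e *\<^sub>R e)" "\<forall>e. \<mu> e \<ge> 0" unfolding K_def by blast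
      thus "c *\<^sub>R x \<in> K" using \<open>c \<ge> 0\<close> unfolding K_def
        by (intro CollectI exI[of _ "\<lambda>e. c * \<mu> e"]) (auto simp: scaleR_sum_right)
    qed
    moreover have "T \<subseteq> K"
    proof
      fix e assume "e \<in> T"
      hence "(\<Sum>e'\<in>T. (if e' = e then 1 else 0) *\<^sub>R e') = e" using finT
        by (simp add: if_distrib[of "\<lambda>c. c *\<^sub>R _"] sum.delta cong: if_cong)
      thus "e \<in> K" unfolding K_def
        by (intro CollectI exI[of _ "\<lambda>e'. if e' = e then 1 else 0"]) auto
    qed
    ultimately have hullK: "convex_cone hull T \<subseteq> K" by (intro hull_minimal)
    have yS: "y \<in> convex_cone hull T"
    proof (rule ccontr)
      assume n: "y \<notin> convex_cone hull T"
      obtain a b where ab: "inner a y < b" "\<forall>x\<in>convex_cone hull T. b < inner a x"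
        using separating_hyperplane_closed_point[OF convex_convex_cone_hull closed_convex_cone_hull[OF finT] n] by blast
      have b0: "b < 0" using ab(2) convex_cone_hull_contains_0 by fastforce
      have aT: "inner a e \<ge> 0" if "e \<in> T" for e
      proof (rule ccontr)
        assume "\<not> inner a e \<ge> 0"
        hence neg: "inner a e < 0" by simp
        define c where "c = b / inner a e"
        have "c \<ge> 0" unfolding c_def using neg b0 by (simp add: divide_nonpos_neg)
        hence "c *\<^sub>R e \<in> convex_cone hull T"
          by (intro convex_cone_hull_mul hull_inc that)
        hence "b < inner a (c *\<^sub>R e)" using ab(2) by blast
        moreover have "inner a (c *\<^sub>R e) = b" unfolding c_def using neg by simp
        ultimately show False by simp
      qed
      have ev: "\<forall>\<^sub>F t in at_right (0::real). \<forall>e\<in>E. (xs + t *\<^sub>R a) \<bullet> e \<ge> -1"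
      proof (rule eventually_ball_finite[OF finE], rule ballI)
        fix e assume eE: "e \<in> E"
        show "\<forall>\<^sub>F t in at_right (0::real). (xs + t *\<^sub>R a) \<bullet> e \<ge> -1"
        proof (cases "e \<in> T")
          case True
          hence h1: "xs \<bullet> e = -1" unfolding T_def by blast
          have h2: "inner a e \<ge> 0" using aT True by blast
          show ?thesis
            by (rule eventually_mono[OF eventually_at_right_less[of 0]])
               (use h1 h2 in \<open>simp add: inner_add_left\<close>)
        next
          case False
          hence gt: "xs \<bullet> e > -1" using DeltaEq xs(1) eE unfolding T_def by force
          have "((\<lambda>t. xs \<bullet> e + t * (a \<bullet> e)) \<longlongrightarrow> xs \<bullet> e + 0 * (a \<bullet> e)) (at_right 0)"
            by (intro tendsto_intros)
          hence "\<forall>\<^sub>F t in at_right (0::real). xs \<bullet> e + t * (a \<bullet> e) > -1"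
            using gt by (intro order_tendstoD(1)) auto
          thus ?thesis by (rule eventually_mono) (simp add: inner_add_left)
        qed
      qed
      have "\<forall>\<^sub>F t in at_right (0::real). t > 0 \<and> (\<forall>e\<in>E. (xs + t *\<^sub>R a) \<bullet> e \<ge> -1)"
        using eventually_conj[OF eventually_at_right_less[of 0] ev] by simp
      then obtain t where t: "t > 0" "\<forall>e\<in>E. (xs + t *\<^sub>R a) \<bullet> e \<ge> -1"
        using eventually_happens trivial_limit_at_right_real by blast
      have "xs + t *\<^sub>R a \<in> \<Delta>" using t(2) DeltaEq by blast
      hence "(xs + t *\<^sub>R a) \<bullet> y \<ge> - \<Phi> y" by (rule PhiLow)
      moreover have "(xs + t *\<^sub>R a) \<bullet> y = - \<Phi> y + t * (a \<bullet> y)" using xs(2) by (simp add: inner_add_left)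
      moreover have "t * (a \<bullet> y) < 0" using t(1) ab(1) b0 by (simp add: mult_pos_neg)
      ultimately show False by simp
    qed
    then obtain \<mu> where mu: "y = (\<Sum>e\<in>T. \<mu> e *\<^sub>R e)" "\<forall>e. \<mu> e \<ge> 0" using hullK unfolding K_def by blast
    obtain f where f: "\<forall>j<r. f j \<in> D j" "xs = (\<Sum>j<r. f j)" using DmemD[OF xs(1)] by blast
    have tight: "f j \<bullet> e = - \<phi> j e" if "j < r" "e \<in> T" for j e
    proof -
      have "(\<Sum>j<r. f j \<bullet> e) = xs \<bullet> e" using f(2) by (simp add: inner_sum_left)
      also have "\<dots> = - \<Phi> e" using that(2) PhiE TE unfolding T_def by auto
      also have "\<dots> = (\<Sum>j<r. - \<phi> j e)" unfolding \<Phi>_def by (simp add: sum_negf)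
      finally show ?thesis using sum_ge_eq[of "{..<r}" "\<lambda>j. - \<phi> j e" "\<lambda>j. f j \<bullet> e" j] lowD f(1) that(1)
        by auto
    qed
    have lin: "\<phi> j y = (\<Sum>e\<in>T. \<mu> e * \<phi> j e)" if "j < r" for j
    proof -
      have "(\<Sum>j<r. f j \<bullet> y) = xs \<bullet> y" using f(2) by (simp add: inner_sum_left)
      also have "\<dots> = (\<Sum>j<r. - \<phi> j y)" using xs(2) unfolding \<Phi>_def by (simp add: sum_negf)
      finally have "f j \<bullet> y = - \<phi> j y"
        using sum_ge_eq[of "{..<r}" "\<lambda>j. - \<phi> j y" "\<lambda>j. f j \<bullet> y" j] lowD f(1) that by auto
      moreover have "f j \<bullet> y = (\<Sum>e\<in>T. \<mu> e * (f j \<bullet> e))" using mu(1) by (simp add: inner_sum_right)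
      moreover have "\<dots> = (\<Sum>e\<in>T. - (\<mu> e * \<phi> j e))" using tight that by (intro sum.cong) auto
      ultimately show ?thesis by (simp add: sum_negf)
    qed
    show ?thesis using TE mu lin by blast
  qed
  define N where "N = (\<lambda>j. dual_nef_part E (D j))"
  have Nsub: "N j \<subseteq> convex hull E" for j
    unfolding N_def dual_nef_part_def
    by (intro hull_minimal) (use zeroE in \<open>auto simp: hull_inc\<close>)
  have phinn: "\<phi> j e \<ge> 0" if "j < r" "e \<in> E" for j e
    using phi01[OF that] unfolding \<phi>_def by auto
  have cover: "\<exists>j<r. y \<in> N j" if yL: "y \<in> convex hull E" "lattice_point y" "y \<noteq> 0" for y
  proof -
    obtain \<mu> T where mT: "T \<subseteq> E" "\<forall>e. \<mu> e \<ge> 0" "y = (\<Sum>e\<in>T. \<mu> e *\<^sub>R e)"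
      "\<forall>j<r. \<phi> j y = (\<Sum>e\<in>T. \<mu> e * \<phi> j e)" using farkas by blast
    have finT: "finite T" using finE mT(1) finite_subset by blast
    have nn: "\<phi> j y \<ge> 0" if "j < r" for j
      using mT phinn that by (auto intro!: sum_nonneg)
    have ints: "\<phi> j y \<in> \<int>" if "j < r" for j using minD[OF that, of y] yL(2) by blast
    have PhiT: "\<Phi> y = (\<Sum>e\<in>T. \<mu> e)"
    proof -
      have "\<Phi> y = (\<Sum>j<r. \<Sum>e\<in>T. \<mu> e * \<phi> j e)" unfolding \<Phi>_def using mT(4) by simp
      also have "\<dots> = (\<Sum>e\<in>T. \<mu> e * \<Phi> e)" unfolding \<Phi>_def
        by (subst sum.swap) (simp add: sum_distrib_left)
      also have "\<dots> = (\<Sum>e\<in>T. \<mu> e)" using PhiE mT(1) by (intro sum.cong) auto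
      finally show ?thesis .
    qed
    obtain xs where xs: "xs \<in> \<Delta>" "xs \<bullet> y = - \<Phi> y" using PhiAtt by blast
    have "E \<subseteq> {z. inner xs z \<ge> -1}" using xs(1) DeltaEq by auto
    hence "convex hull E \<subseteq> {z. inner xs z \<ge> -1}" by (intro hull_minimal convex_halfspace_ge)
    hence Phi1: "\<Phi> y \<le> 1" using yL(1) xs(2) by auto
    have Phi0: "\<Phi> y > 0"
    proof (rule ccontr)
      assume "\<not> \<Phi> y > 0"
      hence "\<forall>x\<in>\<Delta>. 0 \<le> x \<bullet> y" using PhiLow[of _ y] by (smt (verit))
      thus False using zero yL(3) by blast
    qed
    obtain j where j: "j < r" "\<phi> j y \<noteq> 0"
    proof (rule ccontr)
      assume "\<not> thesis"
      hence "\<forall>j<r. \<phi> j y = 0" using that by blast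
      hence "\<Phi> y = 0" unfolding \<Phi>_def by simp
      thus False using Phi0 by simp
    qed
    have "\<phi> j y \<le> \<Phi> y" unfolding \<Phi>_def using nn j(1) by (intro member_le_sum) auto
    moreover have "\<phi> j y \<ge> 1"
    proof -
      obtain k where k: "\<phi> j y = of_int k" using ints[OF j(1)] by (auto elim: Ints_cases)
      thus ?thesis using nn[OF j(1)] j(2) by simp
    qed
    ultimately have phij: "\<phi> j y = 1" "\<Phi> y = 1" using Phi1 by auto
    have others: "\<phi> i y = 0" if "i < r" "i \<noteq> j" for i
    proof -
      have "(\<Sum>l\<in>{i,j}. \<phi> l y) \<le> \<Phi> y" unfolding \<Phi>_def
        using that j(1) nn by (intro sum_mono2) auto
      thus ?thesis using that phij nn[OF that(1)] by simp
    qed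
    have sum1: "(\<Sum>e\<in>T. \<mu> e) = 1" using PhiT phij by simp
    have good: "\<phi> j e = 1" if "e \<in> T" "\<mu> e \<noteq> 0" for e
    proof -
      have z: "\<phi> i e = 0" if "i < r" "i \<noteq> j" for i
      proof -
        have "(\<Sum>e\<in>T. \<mu> e * \<phi> i e) = 0" using mT(4) others that by simp
        hence "\<forall>e\<in>T. \<mu> e * \<phi> i e = 0" using finT mT(2) phinn that mT(1)
          by (subst (asm) sum_nonneg_eq_0_iff) auto
        thus ?thesis using \<open>e \<in> T\<close> \<open>\<mu> e \<noteq> 0\<close> by auto
      qed
      have "1 = \<Phi> e" using PhiE mT(1) \<open>e \<in> T\<close> by auto
      also have "\<dots> = \<phi> j e + (\<Sum>i\<in>{..<r}-{j}. \<phi> i e)" unfolding \<Phi>_def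
        using j(1) by (subst sum.remove[of _ j]) auto
      also have "(\<Sum>i\<in>{..<r}-{j}. \<phi> i e) = 0" using z by (intro sum.neutral) auto
      finally show ?thesis by simp
    qed
    define g where "g = (\<lambda>e. if \<phi> j e = 1 then e else 0)"
    have "y = (\<Sum>e\<in>T. \<mu> e *\<^sub>R g e)" unfolding mT(3) g_def
      using good by (intro sum.cong) auto
    also have "\<dots> \<in> N j" unfolding N_def dual_nef_part_def
    proof (rule convex_sum[OF finT convex_convex_hull sum1])
      show "\<And>i. i \<in> T \<Longrightarrow> 0 \<le> \<mu> i" using mT(2) by blast
      show "\<And>i. i \<in> T \<Longrightarrow> g i \<in> convex hull insert 0 {e \<in> E. supp_phi (D j) e = 1}"
        using mT(1) unfolding g_def \<phi>_def by (auto intro: hull_inc)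
    qed
    finally show ?thesis using j(1) by blast
  qed
  have disj: "y = 0" if "i < r" "j < r" "i \<noteq> j" "y \<in> N i" "y \<in> N j" for i j y
  proof -
    have H: "\<forall>x\<in>D l. 0 \<le> x \<bullet> z" if "l < r" "k < r" "l \<noteq> k" "z \<in> N k" for l k z
    proof -
      have "insert 0 {e \<in> E. supp_phi (D k) e = 1} \<subseteq> {z. \<forall>x\<in>D l. 0 \<le> x \<bullet> z}"
      proof (auto)
        fix e x assume e: "e \<in> E" "supp_phi (D k) e = 1" "x \<in> D l"
        have "(\<Sum>l'\<in>{l,k}. \<phi> l' e) \<le> \<Phi> e" unfolding \<Phi>_def
          using that phinn e(1) by (intro sum_mono2) auto
        hence "\<phi> l e \<le> 0" using PhiE[OF e(1)] e(2) that(3) unfolding \<phi>_def by simp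
        thus "0 \<le> x \<bullet> e" using lowD[OF that(1) e(3), of e] by linarith
      qed
      moreover have "convex {z. \<forall>x\<in>D l. 0 \<le> x \<bullet> z}"
        unfolding convex_def by (auto simp: inner_add_right intro!: add_nonneg_nonneg mult_nonneg_nonneg)
      ultimately have "convex hull insert 0 {e \<in> E. supp_phi (D k) e = 1} \<subseteq> {z. \<forall>x\<in>D l. 0 \<le> x \<bullet> z}"
        by (rule hull_minimal)
      thus ?thesis using that(4) unfolding N_def dual_nef_part_def by blast
    qed
    have "\<forall>x\<in>\<Delta>. 0 \<le> x \<bullet> y"
    proof
      fix x assume "x \<in> \<Delta>"
      then obtain f where f: "\<forall>l<r. f l \<in> D l" "x = (\<Sum>l<r. f l)" using DmemD by blast
      have "x \<bullet> y = (\<Sum>l<r. f l \<bullet> y)" using f(2) by (simp add: inner_sum_left)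
      also have "\<dots> \<ge> 0"
      proof (rule sum_nonneg)
        fix l assume l: "l \<in> {..<r}"
        show "0 \<le> f l \<bullet> y"
        proof (cases "l = j")
          case True
          thus ?thesis using H[of l i y] that f(1) l by auto
        next
          case False
          thus ?thesis using H[of l j y] that f(1) l by auto
        qed
      qed
      finally show "0 \<le> x \<bullet> y" .
    qed
    thus ?thesis using zero by blast
  qed
  define L where "L = {x \<in> convex hull E. lattice_point x}"
  define LJ where "LJ = (\<lambda>j. {x \<in> N j. lattice_point x})"
  have lat0: "lattice_point (0::real^'d)" unfolding lattice_point_def by simp
  have finL: "finite L" unfolding L_def using finE
    by (intro lattice_finite) (simp add: compact_imp_bounded compact_convex_hull finite_imp_compact)
  have LJsub: "LJ j \<subseteq> L" for j unfolding LJ_def L_def using Nsub by blast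
  have finLJ: "finite (LJ j)" for j using finL LJsub finite_subset by blast
  have zLJ: "0 \<in> LJ j" for j unfolding LJ_def N_def dual_nef_part_def using lat0 by (auto intro: hull_inc)
  have Leq: "L = insert 0 (\<Union>j\<in>{..<r}. LJ j - {0})"
  proof
    show "L \<subseteq> insert 0 (\<Union>j\<in>{..<r}. LJ j - {0})"
    proof
      fix y assume "y \<in> L"
      thus "y \<in> insert 0 (\<Union>j\<in>{..<r}. LJ j - {0})"
        using cover unfolding L_def LJ_def by blast
    qed
    show "insert 0 (\<Union>j\<in>{..<r}. LJ j - {0}) \<subseteq> L" using LJsub zeroE lat0 unfolding L_def by blast
  qed
  have cardU: "card (\<Union>j\<in>{..<r}. LJ j - {0}) = (\<Sum>j<r. card (LJ j - {0}))"
    by (rule card_UN_disjoint) (use finLJ disj in \<open>auto simp: LJ_def\<close>)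
  have "card L = Suc (\<Sum>j<r. card (LJ j - {0}))"
    unfolding Leq using finLJ cardU by (subst card_insert_disjoint) auto
  moreover have "card (LJ j - {0}) = card (LJ j) - 1" for j using zLJ finLJ by simp
  moreover have "card (LJ j) \<ge> 1" for j using zLJ finLJ
    by (metis One_nat_def Suc_leI card_gt_0_iff empty_iff)
  ultimately have "int (card L) = 1 + (\<Sum>j<r. (int (card (LJ j)) - 1))"
    by (simp add: of_nat_diff)
  also have "\<dots> = (\<Sum>j<r. int (card (LJ j))) - int r + 1"
    by (simp add: sum_subtractf)
  finally show ?thesis unfolding lpts_def L_def LJ_def N_def by simp
qed
end
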